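(* Let $t$ be a well-behaved behavior. Then the set $\partial_{\simeq} t$ of dissimilar descendants of $t$ is finite; equivalently, the set of descendants of $t$ contains only finitely many $\simeq$-equivalence classes.
   Context: Let $\Sigma$ be a finite alphabet. Behaviors are the terms generated by $r,s ::= \phi \mid \varepsilon \mid x\ (x\in\Sigma) \mid r+s \mid r\cdot s \mid r^* \mid \mathrm{fork}(r)$. For words $v,w\in\Sigma^*$ the shuffle $v\| w\subseteq \Sigma^*$ is defined by $\varepsilon\|w=\{w\}$, $v\|\varepsilon=\{v\}$, $xv\|yw=\{x\}\cdot(v\|yw)\cup\{y\}\cdot(xv\|w)$ for $x,y\in\Sigma$, and it is lifted to languages by $L\|M=\bigcup_{v\in L,w\in M} v\|w$; $L\cdot M$ denotes concatenation of languages. For $K\subseteq\Sigma^*$ the trace language $L(r,K)\subseteq\Sigma^*$ is defined by structural recursion: $L(\phi,K)=\emptyset$, $L(\varepsilon,K)=K$, $L(x,K)=\{x\}\cdot K$, $L(r+s,K)=L(r,K)\cup L(s,K)$, $L(r\cdot s,K)=L(r,L(s,K))$, $L(r^*,K)$ is the least fixpoint (w.r.t. $\subseteq$) of the monotone map $X\mapsto L(r,X)\cup K$, and $L(\mathrm{fork}(r),K)=L(r)\|K$, where $L(r)=L(r,\{\varepsilon\})$. Semantic containment: $r\sqsubseteq s$ iff $L(r,K)\subseteq L(s,K)$ for all $K\subseteq\Sigma^*$. The concurrent part $\mathcal C(r)$ is the behavior defined by: $\mathcal C(\phi)=\phi$, $\mathcal C(\varepsilon)=\varepsilon$, $\mathcal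 C(x)=\phi$, $\mathcal C(r+s)=\mathcal C(r)+\mathcal C(s)$, $\mathcal C(r\cdot s)=\mathcal C(r)\cdot\mathcal C(s)$, $\mathcal C(r^* )=\mathcal C(r)^*$, $\mathcal C(\mathrm{fork}(r))=\mathrm{fork}(r)$. The derivative $\partial_x r$ of a behavior $r$ by $x\in\Sigma$ is the behavior defined by: $\partial_x\phi=\phi$, $\partial_x\varepsilon=\phi$, $\partial_x y=\varepsilon$ if $y=x$ and $\phi$ otherwise, $\partial_x(r+s)=\partial_x r+\partial_x s$, $\partial_x(r\cdot s)=\partial_x r\cdot s+\mathcal C(r)\cdot\partial_x s$, $\partial_x(r^* )=\partial_x r\cdot r^*$, $\partial_x(\mathrm{fork}(r))=\mathrm{fork}(\partial_x r)$; it is extended to words by $\partial_\varepsilon r=r$ and $\partial_{xw}r=\partial_w(\partial_x r)$. A descendant of $r$ is any behavior $\partial_w r$ with $w\in\Sigma^*$; $\partial r$ denotes the set of descendants of $r$. Similarity $\simeq$ is the smallest relation on behaviors that is reflexive, symmetric, transitive, closed under contexts (if $s\simeq t$ then $E[s]\simeq E[t]$ for every context $E ::= [\,] \mid E^* \mid E\cdot s \mid r\cdot E \mid E+s \mid r+E \mid \mathrm{fork}(E)$, where $E[t]$ replaces the hole by $t$), and contains the axioms $r+(s+t)\simeq(r+s)+t$, $r+s\simeq s+r$, $r+r\simeq r$, $r+\phi\simeq r$, $\phi+r\simeq r$, $\varepsilon\cdot r\simeq r$, $r\cdot\varepsilon\simeq r$, $\varepsilon^*\simeq\varepsilon$, $\mathrm{fork}(\varepsilon)\simeq\varepsilon$,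 $\phi\cdot r\simeq\phi$, $r\cdot\phi\simeq\phi$, $\phi^*\simeq\varepsilon$, $\mathrm{fork}(\phi)\simeq\phi$. The set of dissimilar descendants $\partial_{\simeq} r$ is a set containing exactly one (arbitrarily chosen) representative of each $\simeq$-equivalence class of elements of $\partial r$. A behavior $t$ is well-behaved if every subterm of $t$ of the form $r^*$ satisfies $\mathcal C(\partial_w r)\sqsubseteq\varepsilon$ for all $w\in\Sigma^*$. *)

theory Defs
  imports Main
begin

datatype 'a beh =
    Phi
  | Eps
  | Sym 'a
  | Plus "'a beh" "'a beh"
  | Seq "'a beh" "'a beh"
  | Star "'a beh"
  | Fork "'a beh"

definition shuffle_lang :: "'a list set \<Rightarrow> 'a list set \<Rightarrow> 'a list set" where
  "shuffle_lang L M = (\<Union>v\<in>L. \<Union>w\<in>M. shuffles v w)"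

primrec Lang :: "'a beh \<Rightarrow> 'a list set \<Rightarrow> 'a list set" where
  "Lang Phi K = {}"
| "Lang Eps K = K"
| "Lang (Sym x) K = (\<lambda>w. x # w) ` K"
| "Lang (Plus r s) K = Lang r K \<union> Lang s K"
| "Lang (Seq r s) K = Lang r (Lang s K)"
| "Lang (Star r) K = lfp (\<lambda>X. Lang r X \<union> K)"
| "Lang (Fork r) K = shuffle_lang (Lang r {[]}) K"

definition contained :: "'a beh \<Rightarrow> 'a beh \<Rightarrow> bool" where
  "contained r s \<longleftrightarrow> (\<forall>K. Lang r K \<subseteq> Lang s K)"

primrec Conc :: "'a beh \<Rightarrow> 'a beh" where
  "Conc Phi = Phi"
| "Conc Eps = Eps"
| "Conc (Sym x) = Phi"
| "Conc (Plus r s) = Plus (Conc r) (Conc s)"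
| "Conc (Seq r s) = Seq (Conc r) (Conc s)"
| "Conc (Star r) = Star (Conc r)"
| "Conc (Fork r) = Fork r"

primrec deriv :: "'a \<Rightarrow> 'a beh \<Rightarrow> 'a beh" where
  "deriv x Phi = Phi"
| "deriv x Eps = Phi"
| "deriv x (Sym y) = (if y = x then Eps else Phi)"
| "deriv x (Plus r s) = Plus (deriv x r) (deriv x s)"
| "deriv x (Seq r s) = Plus (Seq (deriv x r) s) (Seq (Conc r) (deriv x s))"
| "deriv x (Star r) = Seq (deriv x r) (Star r)"
| "deriv x (Fork r) = Fork (deriv x r)"

primrec derivw :: "'a list \<Rightarrow> 'a beh \<Rightarrow> 'a beh" where
  "derivw [] r = r"
| "derivw (x # w) r = derivw w (deriv x r)"

definition descendants :: "'a beh \<Rightarrow> 'a beh set" where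
  "descendants r = {derivw w r | w. True}"

datatype 'a ctx =
    Hole
  | CStar "'a ctx"
  | CSeqL "'a ctx" "'a beh"
  | CSeqR "'a beh" "'a ctx"
  | CPlusL "'a ctx" "'a beh"
  | CPlusR "'a beh" "'a ctx"
  | CFork "'a ctx"

primrec fill :: "'a ctx \<Rightarrow> 'a beh \<Rightarrow> 'a beh" where
  "fill Hole t = t"
| "fill (CStar E) t = Star (fill E t)"
| "fill (CSeqL E s) t = Seq (fill E t) s"
| "fill (CSeqR r E) t = Seq r (fill E t)"
| "fill (CPlusL E s) t = Plus (fill E t) s"
| "fill (CPlusR r E) t = Plus r (fill E t)"
| "fill (CFork E) t = Fork (fill E t)"

inductive sim :: "'a beh \<Rightarrow> 'a beh \<Rightarrow> bool" where
  sim_refl: "sim r r"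
| sim_sym: "sim r s \<Longrightarrow> sim s r"
| sim_trans: "sim r s \<Longrightarrow> sim s t \<Longrightarrow> sim r t"
| sim_ctx: "sim s t \<Longrightarrow> sim (fill E s) (fill E t)"
| ax_assoc: "sim (Plus r (Plus s t)) (Plus (Plus r s) t)"
| ax_comm: "sim (Plus r s) (Plus s r)"
| ax_idem: "sim (Plus r r) r"
| ax_plus_phi_r: "sim (Plus r Phi) r"
| ax_plus_phi_l: "sim (Plus Phi r) r"
| ax_seq_eps_l: "sim (Seq Eps r) r"
| ax_seq_eps_r: "sim (Seq r Eps) r"
| ax_star_eps: "sim (Star Eps) Eps"
| ax_fork_eps: "sim (Fork Eps) Eps"
| ax_seq_phi_l: "sim (Seq Phi r) Phi"
| ax_seq_phi_r: "sim (Seq r Phi) Phi"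
| ax_star_phi: "sim (Star Phi) Eps"
| ax_fork_phi: "sim (Fork Phi) Phi"

definition sim_rel :: "('a beh \<times> 'a beh) set" where
  "sim_rel = {(r, s). sim r s}"

primrec subterms :: "'a beh \<Rightarrow> 'a beh set" where
  "subterms Phi = {Phi}"
| "subterms Eps = {Eps}"
| "subterms (Sym x) = {Sym x}"
| "subterms (Plus r s) = insert (Plus r s) (subterms r \<union> subterms s)"
| "subterms (Seq r s) = insert (Seq r s) (subterms r \<union> subterms s)"
| "subterms (Star r) = insert (Star r) (subterms r)"
| "subterms (Fork r) = insert (Fork r) (subterms r)"

definition well_behaved :: "'a beh \<Rightarrow> bool" where
  "well_behaved t \<longleftrightarrow>
     (\<forall>r. Star r \<in> subterms t \<longrightarrow> (\<forall>w. contained (Conc (derivw w r)) Eps))"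

end

theory Submission
  imports Defs
begin

lemma shuffle_lang_mono: "K \<subseteq> K' \<Longrightarrow> shuffle_lang L K \<subseteq> shuffle_lang L K'"
  unfolding shuffle_lang_def by blast

lemma Lang_mono: "K \<subseteq> K' \<Longrightarrow> Lang r K \<subseteq> Lang r K'"
proof (induction r arbitrary: K K')
  case (Star r)
  then show ?case by (simp, intro lfp_mono, blast)
next
  case (Fork r)
  then show ?case by (simp add: shuffle_lang_mono)
next
  case (Plus r s)
  have "Lang r K \<subseteq> Lang r K'" "Lang s K \<subseteq> Lang s K'" using Plus by auto
  then show ?case by auto
next
  case (Seq r s) then show ?case by simp
qed auto

lemma mono_star: "mono (\<lambda>X. Lang r X \<union> K)"
  by (rule monoI) (use Lang_mono in blast)

lemma Lang_Star_unfold: "Lang (Star r) K = Lang r (Lang (Star r) K) \<union> K"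
  using lfp_unfold[OF mono_star[of r K]] by simp

lemma Lang_empty: "Lang r {} = {}"
proof (induction r)
  case (Star r)
  have "lfp (\<lambda>X. Lang r X \<union> {}) \<subseteq> {}"
    by (rule lfp_lowerbound) (simp add: Star)
  then show ?case by simp
qed (auto simp: shuffle_lang_def)

lemma Lang_ne: "Lang r K \<noteq> {} \<Longrightarrow> K' \<noteq> {} \<Longrightarrow> Lang r K' \<noteq> {}"
proof (induction r arbitrary: K K')
  case (Star r)
  then show ?case using Lang_Star_unfold[of r K'] by auto
next
  case (Fork r)
  then show ?case using splice_in_shuffles by (auto simp: shuffle_lang_def) blast
next
  case (Seq r s)
  then show ?case by (metis Lang.simps(5) Lang_empty)
next
  case (Plus r s)
  then show ?case by (metis Lang.simps(4) Un_empty)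
qed auto

lemma Lang_len: "u \<in> Lang r K \<Longrightarrow> \<exists>w\<in>K. length w \<le> length u"
proof (induction r arbitrary: K u)
  case (Star r)
  let ?S = "{u::'a list. \<exists>w\<in>K. length w \<le> length u}"
  have "lfp (\<lambda>X. Lang r X \<union> K) \<subseteq> ?S"
  proof (rule lfp_lowerbound, safe)
    fix u assume "u \<in> Lang r ?S"
    note Star.IH[of u ?S]
    then have "\<exists>v\<in>?S. length v \<le> length u" using \<open>u \<in> Lang r ?S\<close> by blast
    then obtain v where "v \<in> ?S" "length v \<le> length u" by (elim bexE)
    then obtain w where "w \<in> K" "length w \<le> length v" by blast
    then show "\<exists>w\<in>K. length w \<le> length u" using \<open>length v \<le> length u\<close> by (meson le_trans)
  qed auto
  with Star.prems show ?case by auto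
next
  case (Fork r)
  then obtain v w where "w \<in> K" "u \<in> shuffles v w" by (auto simp: shuffle_lang_def)
  then show ?case using length_shuffles[of u v w] by (intro bexI[of _ w]) auto
next
  case (Seq r s)
  then obtain v where "v \<in> Lang s K" "length v \<le> length u" by (metis Lang.simps(5))
  then show ?case using Seq.IH(2)[of v K] using le_trans by blast
next
  case (Sym x)
  then obtain w where "w \<in> K" "u = x # w" by auto
  then show ?case by (intro bexI[of _ w]) auto
qed auto

lemma sim_plus: "sim a a' \<Longrightarrow> sim b b' \<Longrightarrow> sim (Plus a b) (Plus a' b')"
proof -
  assume "sim a a'" "sim b b'"
  then have "sim (Plus a b) (Plus a' b)" "sim (Plus a' b) (Plus a' b')"
    using sim_ctx[of a a' "CPlusL Hole b"] sim_ctx[of b b' "CPlusR a' Hole"] by simp_all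
  then show ?thesis by (rule sim_trans)
qed
lemma sim_seq: "sim a a' \<Longrightarrow> sim b b' \<Longrightarrow> sim (Seq a b) (Seq a' b')"
proof -
  assume "sim a a'" "sim b b'"
  then have "sim (Seq a b) (Seq a' b)" "sim (Seq a' b) (Seq a' b')"
    using sim_ctx[of a a' "CSeqL Hole b"] sim_ctx[of b b' "CSeqR a' Hole"] by simp_all
  then show ?thesis by (rule sim_trans)
qed
lemma sim_star: "sim a a' \<Longrightarrow> sim (Star a) (Star a')"
  using sim_ctx[of a a' "CStar Hole"] by simp
lemma sim_fork: "sim a a' \<Longrightarrow> sim (Fork a) (Fork a')"
  using sim_ctx[of a a' "CFork Hole"] by simp

lemma Lang_star_nil: "[] \<in> Lang (Star r) {[]}"
  using Lang_Star_unfold[of r "{[]}"] by auto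

lemma Lang_class: "(Lang r {[]} = {} \<longrightarrow> sim r Phi) \<and> (Lang r {[]} = {[]} \<longrightarrow> sim r Eps)"
proof (induction r)
  case Phi then show ?case by (auto intro: sim_refl)
next
  case Eps then show ?case by (auto intro: sim_refl)
next
  case (Sym x) then show ?case by auto
next
  case (Plus a b)
  have IHa: "Lang a {[]} = {} \<Longrightarrow> sim a Phi" "Lang a {[]} = {[]} \<Longrightarrow> sim a Eps"
    using Plus.IH(1) by blast+
  have IHb: "Lang b {[]} = {} \<Longrightarrow> sim b Phi" "Lang b {[]} = {[]} \<Longrightarrow> sim b Eps"
    using Plus.IH(2) by blast+
  show ?case
  proof (intro conjI impI)
    assume "Lang (Plus a b) {[]} = {}"
    then have "sim a Phi" "sim b Phi" using IHa IHb by auto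
    then have "sim (Plus a b) (Plus Phi Phi)" by (rule sim_plus)
    then show "sim (Plus a b) Phi" using ax_plus_phi_r by (rule sim_trans)
  next
    assume h: "Lang (Plus a b) {[]} = {[]}"
    then have ha: "Lang a {[]} \<subseteq> {[]}" and hb: "Lang b {[]} \<subseteq> {[]}" by auto
    show "sim (Plus a b) Eps"
    proof (cases "Lang a {[]} = {}")
      case True
      then have "Lang b {[]} = {[]}" using h by simp
      then have "sim (Plus a b) (Plus Phi Eps)" using IHa(1)[OF True] IHb(2) by (intro sim_plus)
      then show ?thesis using ax_plus_phi_l by (rule sim_trans)
    next
      case False
      then have A: "Lang a {[]} = {[]}" using ha by (meson subset_singletonD)
      show ?thesis
      proof (cases "Lang b {[]} = {}")
        case True
        then have "sim (Plus a b) (Plus Eps Phi)" using IHa(2)[OF A] IHb(1) by (intro sim_plus)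
        then show ?thesis using ax_plus_phi_r by (rule sim_trans)
      next
        case False
        then have "Lang b {[]} = {[]}" using hb by (meson subset_singletonD)
        then have "sim (Plus a b) (Plus Eps Eps)" using IHa(2)[OF A] IHb(2) by (intro sim_plus)
        then show ?thesis using ax_idem by (rule sim_trans)
      qed
    qed
  qed
next
  case (Seq a b)
  let ?M = "Lang b {[]}"
  show ?case
  proof (cases "?M = {}")
    case True
    then have "sim b Phi" using Seq by auto
    then have "sim (Seq a b) (Seq a Phi)" by (rule sim_seq[OF sim_refl])
    then have "sim (Seq a b) Phi" using ax_seq_phi_r by (rule sim_trans)
    then show ?thesis using True by (auto simp: Lang_empty)
  next
    case M: False
    show ?thesis
    proof (cases "?M = {[]}")
      case True
      then have "sim b Eps" using Seq by auto
      then have "sim (Seq a b) (Seq a Eps)" by (rule sim_seq[OF sim_refl])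
      then have "sim (Seq a b) a" using ax_seq_eps_r by (rule sim_trans)
      have e: "Lang (Seq a b) {[]} = Lang a {[]}" using True by simp
      show ?thesis unfolding e
      proof (intro conjI impI)
        assume "Lang a {[]} = {}" then have "sim a Phi" using Seq.IH(1) by blast
        with \<open>sim (Seq a b) a\<close> show "sim (Seq a b) Phi" by (rule sim_trans)
      next
        assume "Lang a {[]} = {[]}" then have "sim a Eps" using Seq.IH(1) by blast
        with \<open>sim (Seq a b) a\<close> show "sim (Seq a b) Eps" by (rule sim_trans)
      qed
    next
      case False
      with M obtain w where w: "w \<in> ?M" "w \<noteq> []" by blast
      show ?thesis
      proof (intro conjI impI)
        assume "Lang (Seq a b) {[]} = {}"
        then have "Lang a ?M = {}" by simp
        then have "Lang a {[]} = {}" using Lang_ne M by blast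
        then have "sim a Phi" using Seq by auto
        then have "sim (Seq a b) (Seq Phi b)" by (rule sim_seq[OF _ sim_refl])
        then show "sim (Seq a b) Phi" using ax_seq_phi_l by (rule sim_trans)
      next
        assume h: "Lang (Seq a b) {[]} = {[]}"
        then have "Lang a ?M = {[]}" by simp
        then have "Lang a {w} \<noteq> {}" using Lang_ne[of a ?M "{w}"] by auto
        then obtain v where v: "v \<in> Lang a {w}" by blast
        then have "length w \<le> length v" using Lang_len[OF v] by auto
        moreover have "v \<in> Lang a ?M" using v Lang_mono[of "{w}" ?M a] w by auto
        ultimately show "sim (Seq a b) Eps" using w \<open>Lang a ?M = {[]}\<close> by auto
      qed
    qed
  qed
next
  case (Star a)
  show ?case
  proof (intro conjI impI)
    assume "Lang (Star a) {[]} = {}" then show "sim (Star a) Phi" using Lang_star_nil by auto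
  next
    assume h: "Lang (Star a) {[]} = {[]}"
    have "Lang a {[]} \<subseteq> Lang a (Lang (Star a) {[]})" using h by simp
    also have "\<dots> \<subseteq> Lang (Star a) {[]}" using Lang_Star_unfold[of a "{[]}"] by blast
    finally have "Lang a {[]} = {} \<or> Lang a {[]} = {[]}" using h by (auto simp: subset_singleton_iff)
    then have "sim a Phi \<or> sim a Eps" using Star by auto
    then show "sim (Star a) Eps"
    proof
      assume "sim a Phi" then have "sim (Star a) (Star Phi)" by (rule sim_star)
      then show ?thesis using ax_star_phi by (rule sim_trans)
    next
      assume "sim a Eps" then have "sim (Star a) (Star Eps)" by (rule sim_star)
      then show ?thesis using ax_star_eps by (rule sim_trans)
    qed
  qed
next
  case (Fork a)
  have e: "Lang (Fork a) {[]} = Lang a {[]}" by (auto simp: shuffle_lang_def)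
  show ?case unfolding e
  proof (intro conjI impI)
    assume "Lang a {[]} = {}" then have "sim (Fork a) (Fork Phi)" using Fork sim_fork by blast
    then show "sim (Fork a) Phi" using ax_fork_phi by (rule sim_trans)
  next
    assume "Lang a {[]} = {[]}" then have "sim (Fork a) (Fork Eps)" using Fork sim_fork by blast
    then show "sim (Fork a) Eps" using ax_fork_eps by (rule sim_trans)
  qed
qed

lemma contained_Eps: "contained c Eps \<Longrightarrow> sim c Eps \<or> sim c Phi"
proof -
  assume "contained c Eps"
  then have "Lang c {[]} \<subseteq> {[]}" by (auto simp: contained_def)
  then have "Lang c {[]} = {} \<or> Lang c {[]} = {[]}" by (auto simp: subset_singleton_iff)
  then show ?thesis using Lang_class[of c] by auto
qed

lemma ctx_lift:
  assumes "sim s t" "sim (Conc s) (Conc t)" "\<And>x. sim (deriv x s) (deriv x t)"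
  shows "sim (Conc (fill E s)) (Conc (fill E t)) \<and> (\<forall>x. sim (deriv x (fill E s)) (deriv x (fill E t)))"
proof (induction E)
  case Hole then show ?case using assms by simp
next
  case (CStar E)
  have f: "sim (fill E s) (fill E t)" using sim_ctx[OF assms(1)] .
  show ?case using CStar by (simp add: sim_star sim_seq f)
next
  case (CSeqL E r)
  show ?case using CSeqL by (simp add: sim_seq sim_plus sim_refl)
next
  case (CSeqR r E)
  have f: "sim (fill E s) (fill E t)" using sim_ctx[OF assms(1)] .
  show ?case using CSeqR by (simp add: sim_seq sim_plus sim_refl f)
next
  case (CPlusL E r)
  show ?case using CPlusL by (simp add: sim_plus sim_refl)
next
  case (CPlusR r E)
  show ?case using CPlusR by (simp add: sim_plus sim_refl)
next
  case (CFork E)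
  have f: "sim (fill E s) (fill E t)" using sim_ctx[OF assms(1)] .
  show ?case using CFork by (simp add: sim_fork f)
qed

lemma sim_deriv_conc: "sim s t \<Longrightarrow> sim (Conc s) (Conc t) \<and> (\<forall>x. sim (deriv x s) (deriv x t))"
proof (induction rule: sim.induct)
  case (sim_refl r) then show ?case by (simp add: sim.sim_refl)
next
  case (sim_sym r s) then show ?case by (simp add: sim.sim_sym)
next
  case (sim_trans r s t) then show ?case by (meson sim.sim_trans)
next
  case (sim_ctx s t E) then show ?case using ctx_lift by blast
next
  case (ax_assoc r s t) then show ?case by (simp add: sim.ax_assoc)
next
  case (ax_comm r s) then show ?case by (simp add: sim.ax_comm)
next
  case (ax_idem r) then show ?case by (simp add: sim.ax_idem)
next
  case (ax_plus_phi_r r) then show ?case by (simp add: sim.ax_plus_phi_r)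
next
  case (ax_plus_phi_l r) then show ?case by (simp add: sim.ax_plus_phi_l)
next
  case (ax_seq_eps_l r)
  have "sim (deriv x (Seq Eps r)) (deriv x r)" for x
  proof -
    have "sim (deriv x (Seq Eps r)) (Plus Phi (deriv x r))"
      by (simp, rule sim_plus[OF sim.ax_seq_phi_l sim.ax_seq_eps_l])
    then show ?thesis using sim.ax_plus_phi_l by (rule sim.sim_trans)
  qed
  then show ?case by (simp add: sim.ax_seq_eps_l)
next
  case (ax_seq_eps_r r)
  have "sim (deriv x (Seq r Eps)) (deriv x r)" for x
  proof -
    have "sim (deriv x (Seq r Eps)) (Plus (deriv x r) Phi)"
      by (simp, rule sim_plus[OF sim.ax_seq_eps_r sim.ax_seq_phi_r])
    then show ?thesis using sim.ax_plus_phi_r by (rule sim.sim_trans)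
  qed
  then show ?case by (simp add: sim.ax_seq_eps_r)
next
  case ax_star_eps then show ?case by (simp add: sim.ax_star_eps sim.ax_seq_phi_l)
next
  case ax_fork_eps then show ?case by (simp add: sim.ax_fork_eps sim.ax_fork_phi)
next
  case (ax_seq_phi_l r)
  have "sim (deriv x (Seq Phi r)) Phi" for x
  proof -
    have "sim (deriv x (Seq Phi r)) (Plus Phi Phi)"
      by (simp, rule sim_plus[OF sim.ax_seq_phi_l sim.ax_seq_phi_l])
    then show ?thesis using sim.ax_plus_phi_r by (rule sim.sim_trans)
  qed
  then show ?case by (simp add: sim.ax_seq_phi_l)
next
  case (ax_seq_phi_r r)
  have "sim (deriv x (Seq r Phi)) Phi" for x
  proof -
    have "sim (deriv x (Seq r Phi)) (Plus Phi Phi)"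
      by (simp, rule sim_plus[OF sim.ax_seq_phi_r sim.ax_seq_phi_r])
    then show ?thesis using sim.ax_plus_phi_r by (rule sim.sim_trans)
  qed
  then show ?case by (simp add: sim.ax_seq_phi_r)
next
  case ax_star_phi then show ?case by (simp add: sim.ax_star_phi sim.ax_seq_phi_l)
next
  case ax_fork_phi then show ?case by (simp add: sim.ax_fork_phi)
qed

lemma sim_deriv: "sim s t \<Longrightarrow> sim (deriv x s) (deriv x t)"
  using sim_deriv_conc by blast
lemma sim_Conc: "sim s t \<Longrightarrow> sim (Conc s) (Conc t)"
  using sim_deriv_conc by blast

fun sumL :: "'a beh list \<Rightarrow> 'a beh" where
  "sumL [] = Phi"
| "sumL (x # xs) = Plus x (sumL xs)"

lemma sim_symI: "sim a b \<Longrightarrow> sim b a" by (rule sim_sym)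

lemma sumL_absorb: "x \<in> set ys \<Longrightarrow> sim (Plus x (sumL ys)) (sumL ys)"
proof (induction ys)
  case Nil then show ?case by simp
next
  case (Cons y ys)
  show ?case
  proof (cases "x = y")
    case True
    have "sim (Plus y (Plus y (sumL ys))) (Plus (Plus y y) (sumL ys))" by (rule ax_assoc)
    moreover have "sim (Plus (Plus y y) (sumL ys)) (Plus y (sumL ys))"
      by (rule sim_plus[OF ax_idem sim_refl])
    ultimately have "sim (Plus y (Plus y (sumL ys))) (Plus y (sumL ys))" by (rule sim_trans)
    then show ?thesis using True by simp
  next
    case False
    then have ih: "sim (Plus x (sumL ys)) (sumL ys)" using Cons by simp
    have 1: "sim (Plus x (Plus y (sumL ys))) (Plus (Plus x y) (sumL ys))" by (rule ax_assoc)
    have 2: "sim (Plus (Plus x y) (sumL ys)) (Plus (Plus y x) (sumL ys))"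
      by (rule sim_plus[OF ax_comm sim_refl])
    have 3: "sim (Plus (Plus y x) (sumL ys)) (Plus y (Plus x (sumL ys)))" by (rule sim_sym[OF ax_assoc])
    have 4: "sim (Plus y (Plus x (sumL ys))) (Plus y (sumL ys))" by (rule sim_plus[OF sim_refl ih])
    show ?thesis using sim_trans[OF sim_trans[OF sim_trans[OF 1 2] 3] 4] by simp
  qed
qed

lemma sumL_sub: "set xs \<subseteq> set ys \<Longrightarrow> sim (Plus (sumL xs) (sumL ys)) (sumL ys)"
proof (induction xs)
  case Nil then show ?case by (simp add: ax_plus_phi_l)
next
  case (Cons x xs)
  then have ih: "sim (Plus (sumL xs) (sumL ys)) (sumL ys)" and x: "x \<in> set ys" by auto
  have 1: "sim (Plus (Plus x (sumL xs)) (sumL ys)) (Plus x (Plus (sumL xs) (sumL ys)))"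
    by (rule sim_sym[OF ax_assoc])
  have 2: "sim (Plus x (Plus (sumL xs) (sumL ys))) (Plus x (sumL ys))"
    by (rule sim_plus[OF sim_refl ih])
  show ?case using sim_trans[OF sim_trans[OF 1 2] sumL_absorb[OF x]] by simp
qed

lemma sumL_set: "set xs = set ys \<Longrightarrow> sim (sumL xs) (sumL ys)"
proof -
  assume e: "set xs = set ys"
  have 1: "sim (sumL xs) (Plus (sumL ys) (sumL xs))" using sumL_sub[of ys xs] e by (simp add: sim_sym)
  have 2: "sim (Plus (sumL ys) (sumL xs)) (Plus (sumL xs) (sumL ys))" by (rule ax_comm)
  have 3: "sim (Plus (sumL xs) (sumL ys)) (sumL ys)" using sumL_sub[of xs ys] e by simp
  show ?thesis using sim_trans[OF sim_trans[OF 1 2] 3] .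
qed

lemma sumL_append: "sim (sumL (xs @ ys)) (Plus (sumL xs) (sumL ys))"
proof (induction xs)
  case Nil then show ?case by (simp add: sim_sym[OF ax_plus_phi_l])
next
  case (Cons x xs)
  have "sim (Plus x (sumL (xs @ ys))) (Plus x (Plus (sumL xs) (sumL ys)))"
    by (rule sim_plus[OF sim_refl Cons])
  then show ?case using ax_assoc by (simp, rule sim_trans)
qed

lemma sumL_pointwise: "list_all2 sim xs ys \<Longrightarrow> sim (sumL xs) (sumL ys)"
  by (induction rule: list_all2_induct) (auto intro: sim_refl sim_plus)

lemma deriv_sumL: "deriv x (sumL xs) = sumL (map (deriv x) xs)"
  by (induction xs) auto
lemma Conc_sumL: "Conc (sumL xs) = sumL (map Conc xs)"
  by (induction xs) auto

definition SUMS :: "'a beh set \<Rightarrow> 'a beh set" where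
  "SUMS L = {q. \<exists>zs. set zs \<subseteq> L \<and> sim q (sumL zs)}"

lemma sum_closed:
  assumes "\<forall>y\<in>set xs. \<exists>zs. set zs \<subseteq> L \<and> sim (g y) (sumL zs)"
  shows "\<exists>zs. set zs \<subseteq> L \<and> sim (sumL (map g xs)) (sumL zs)"
  using assms
proof (induction xs)
  case Nil then show ?case by (intro exI[of _ "[]"]) (simp add: sim_refl)
next
  case (Cons y xs)
  then obtain zs1 zs2 where z: "set zs1 \<subseteq> L" "sim (g y) (sumL zs1)"
    "set zs2 \<subseteq> L" "sim (sumL (map g xs)) (sumL zs2)" by auto
  have "sim (Plus (g y) (sumL (map g xs))) (Plus (sumL zs1) (sumL zs2))"
    using z by (intro sim_plus)
  then have "sim (sumL (map g (y # xs))) (sumL (zs1 @ zs2))"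
    using sim_sym[OF sumL_append[of zs1 zs2]] by (simp, rule sim_trans)
  then show ?case using z by (intro exI[of _ "zs1 @ zs2"]) auto
qed

lemma SUMS_step:
  assumes q: "q \<in> SUMS L"
    and resp: "\<And>s t. sim s t \<Longrightarrow> sim (g s) (g t)"
    and dist: "\<And>zs. g (sumL zs) = sumL (map g zs)"
    and leaf: "\<And>y. y \<in> L \<Longrightarrow> \<exists>zs. set zs \<subseteq> L \<and> sim (g y) (sumL zs)"
  shows "g q \<in> SUMS L"
proof -
  obtain xs where xs: "set xs \<subseteq> L" "sim q (sumL xs)" using q by (auto simp: SUMS_def)
  obtain zs where zs: "set zs \<subseteq> L" "sim (sumL (map g xs)) (sumL zs)"
    using sum_closed[of xs L g] xs(1) leaf by blast
  have "sim (g q) (sumL (map g xs))" using resp[OF xs(2)] by (simp add: dist)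
  then have "sim (g q) (sumL zs)" using zs(2) by (rule sim_trans)
  then show ?thesis using zs(1) by (auto simp: SUMS_def)
qed

lemma leaf1: "y \<in> L \<Longrightarrow> \<exists>zs. set zs \<subseteq> L \<and> sim y (sumL zs)"
  by (intro exI[of _ "[y]"]) (simp add: sim_sym[OF ax_plus_phi_r])

lemma leaf_phi: "sim y Phi \<Longrightarrow> \<exists>zs. set zs \<subseteq> L \<and> sim y (sumL zs)"
  by (intro exI[of _ "[]"]) simp

definition fsim :: "'a beh set \<Rightarrow> bool" where
  "fsim A \<longleftrightarrow> (\<exists>F. finite F \<and> (\<forall>a\<in>A. \<exists>f\<in>F. sim a f))"

lemma fsim_mono: "A \<subseteq> B \<Longrightarrow> fsim B \<Longrightarrow> fsim A"
  unfolding fsim_def by blast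

lemma choose_reps:
  assumes "\<forall>z\<in>set zs. \<exists>f\<in>F. sim z f"
  shows "\<exists>ys. list_all2 sim zs ys \<and> set ys \<subseteq> F"
  using assms
proof (induction zs)
  case Nil then show ?case by simp
next
  case (Cons z zs)
  then obtain ys f where "list_all2 sim zs ys" "set ys \<subseteq> F" "f \<in> F" "sim z f" by auto
  then show ?case by (intro exI[of _ "f # ys"]) auto
qed

lemma fsim_SUMS: "fsim L \<Longrightarrow> fsim (SUMS L)"
proof -
  assume "fsim L"
  then obtain F where F: "finite F" "\<forall>a\<in>L. \<exists>f\<in>F. sim a f" by (auto simp: fsim_def)
  define G where "G = (\<lambda>S. sumL (SOME ys. set ys = S)) ` Pow F"
  have "finite G" using F(1) by (simp add: G_def)
  moreover have "\<forall>q\<in>SUMS L. \<exists>g\<in>G. sim q g"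
  proof
    fix q assume "q \<in> SUMS L"
    then obtain zs where zs: "set zs \<subseteq> L" "sim q (sumL zs)" by (auto simp: SUMS_def)
    then obtain ys where ys: "list_all2 sim zs ys" "set ys \<subseteq> F" using choose_reps[of zs F] F(2) by blast
    have fin: "finite (set ys)" by simp
    let ?ys' = "SOME ys'. set ys' = set ys"
    have "set ?ys' = set ys" by (rule someI_ex) (use finite_list[OF fin] in blast)
    then have "sim (sumL ys) (sumL ?ys')" by (intro sumL_set) simp
    then have "sim q (sumL ?ys')" using zs(2) sumL_pointwise[OF ys(1)] by (meson sim_trans)
    moreover have "sumL ?ys' \<in> G" using ys(2) by (auto simp: G_def)
    ultimately show "\<exists>g\<in>G. sim q g" by blast
  qed
  ultimately show ?thesis by (auto simp: fsim_def)
qed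

inductive_set cl :: "'a beh \<Rightarrow> 'a beh set" for r where
  cl_base: "r \<in> cl r"
| cl_deriv: "q \<in> cl r \<Longrightarrow> deriv x q \<in> cl r"
| cl_conc: "q \<in> cl r \<Longrightarrow> Conc q \<in> cl r"

lemma derivw_cl: "q \<in> cl r \<Longrightarrow> derivw w q \<in> cl r"
  by (induction w arbitrary: q) (auto intro: cl_deriv)

lemma desc_cl: "descendants r \<subseteq> cl r"
  unfolding descendants_def using derivw_cl[OF cl_base] by blast

lemma derivw_snoc: "derivw (w @ [x]) r = deriv x (derivw w r)"
  by (induction w arbitrary: r) auto

lemma desc_deriv: "p \<in> descendants a \<Longrightarrow> deriv x p \<in> descendants a"
  unfolding descendants_def by (auto simp flip: derivw_snoc)

lemma desc_self: "a \<in> descendants a"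
  unfolding descendants_def by (auto intro: exI[of _ "[]"])

lemma wb_sub:
  "well_behaved (Plus a b) \<Longrightarrow> well_behaved a \<and> well_behaved b"
  "well_behaved (Seq a b) \<Longrightarrow> well_behaved a \<and> well_behaved b"
  "well_behaved (Star a) \<Longrightarrow> well_behaved a"
  "well_behaved (Fork a) \<Longrightarrow> well_behaved a"
  unfolding well_behaved_def by auto

lemma fsim_finite: "finite A \<Longrightarrow> fsim A"
  unfolding fsim_def by (auto intro: sim_refl)

lemma main: "well_behaved r \<Longrightarrow> fsim (cl r)"
proof (induction r)
  case Phi
  have "cl Phi \<subseteq> {Phi}" by (rule subsetI, erule cl.induct) auto
  then show ?case by (rule fsim_mono[OF _ fsim_finite]) simp
next
  case Eps
  have "cl Eps \<subseteq> {Eps, Phi}" by (rule subsetI, erule cl.induct) auto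
  then show ?case by (rule fsim_mono[OF _ fsim_finite]) simp
next
  case (Sym y)
  have "cl (Sym y) \<subseteq> {Sym y, Eps, Phi}" by (rule subsetI, erule cl.induct) (auto split: if_splits)
  then show ?case by (rule fsim_mono[OF _ fsim_finite]) simp
next
  case (Plus a b)
  then have A: "fsim (cl a)" and B: "fsim (cl b)" using wb_sub(1) by blast+
  have sub: "cl (Plus a b) \<subseteq> {Plus p q | p q. p \<in> cl a \<and> q \<in> cl b}"
  proof (rule subsetI, erule cl.induct)
    show "Plus a b \<in> {Plus p q | p q. p \<in> cl a \<and> q \<in> cl b}" using cl_base by blast
  next
    fix q x assume "q \<in> {Plus p q | p q. p \<in> cl a \<and> q \<in> cl b}"
    then obtain p p' where h: "q = Plus p p'" "p \<in> cl a" "p' \<in> cl b" by blast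
    show "deriv x q \<in> {Plus p q | p q. p \<in> cl a \<and> q \<in> cl b}"
      using h cl_deriv[OF h(2)] cl_deriv[OF h(3)] by auto
  next
    fix q assume "q \<in> {Plus p q | p q. p \<in> cl a \<and> q \<in> cl b}"
    then obtain p p' where h: "q = Plus p p'" "p \<in> cl a" "p' \<in> cl b" by blast
    show "Conc q \<in> {Plus p q | p q. p \<in> cl a \<and> q \<in> cl b}"
      using h cl_conc[OF h(2)] cl_conc[OF h(3)] by auto
  qed
  obtain Fa Fb where F: "finite Fa" "\<forall>x\<in>cl a. \<exists>f\<in>Fa. sim x f" "finite Fb" "\<forall>x\<in>cl b. \<exists>f\<in>Fb. sim x f"
    using A B by (auto simp: fsim_def)
  have "fsim {Plus p q | p q. p \<in> cl a \<and> q \<in> cl b}"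
    unfolding fsim_def
  proof (intro exI[of _ "(\<lambda>(f,g). Plus f g) ` (Fa \<times> Fb)"] conjI ballI)
    show "finite ((\<lambda>(f,g). Plus f g) ` (Fa \<times> Fb))" using F by simp
  next
    fix x assume "x \<in> {Plus p q | p q. p \<in> cl a \<and> q \<in> cl b}"
    then obtain p q where "x = Plus p q" "p \<in> cl a" "q \<in> cl b" by blast
    then obtain f g where "f \<in> Fa" "g \<in> Fb" "sim p f" "sim q g" using F by blast
    then show "\<exists>h\<in>(\<lambda>(f,g). Plus f g) ` (Fa \<times> Fb). sim x h"
      using \<open>x = Plus p q\<close> by (intro bexI[of _ "Plus f g"]) (auto intro: sim_plus)
  qed
  then show ?case by (rule fsim_mono[OF sub])
next
  case (Fork a)
  then have A: "fsim (cl a)" using wb_sub(4) by blast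
  have sub: "cl (Fork a) \<subseteq> Fork ` cl a"
  proof (rule subsetI, erule cl.induct)
    show "Fork a \<in> Fork ` cl a" using cl_base by blast
  next
    fix q x assume "q \<in> Fork ` cl a"
    then obtain p where h: "q = Fork p" "p \<in> cl a" by blast
    show "deriv x q \<in> Fork ` cl a" using h cl_deriv[OF h(2)] by auto
  next
    fix q assume "q \<in> Fork ` cl a"
    then obtain p where h: "q = Fork p" "p \<in> cl a" by blast
    show "Conc q \<in> Fork ` cl a" using h by auto
  qed
  obtain Fa where F: "finite Fa" "\<forall>x\<in>cl a. \<exists>f\<in>Fa. sim x f"
    using A by (auto simp: fsim_def)
  have "fsim (Fork ` cl a)"
    unfolding fsim_def
  proof (intro exI[of _ "Fork ` Fa"] conjI ballI)
    show "finite (Fork ` Fa)" using F by simp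
  next
    fix x assume "x \<in> Fork ` cl a"
    then obtain p where "x = Fork p" "p \<in> cl a" by blast
    then obtain f where "f \<in> Fa" "sim p f" using F by blast
    then show "\<exists>h\<in>Fork ` Fa. sim x h"
      using \<open>x = Fork p\<close> by (intro bexI[of _ "Fork f"]) (auto intro: sim_fork)
  qed
  then show ?case by (rule fsim_mono[OF sub])
next
  case (Seq a b)
  then have A: "fsim (cl a)" and B: "fsim (cl b)" using wb_sub(2) by blast+
  define L where "L = {Seq p q | p q. p \<in> cl a \<and> q \<in> cl b}"
  have sub: "cl (Seq a b) \<subseteq> SUMS L"
  proof (rule subsetI, erule cl.induct)
    have "Seq a b \<in> L" using cl_base by (auto simp: L_def)
    then show "Seq a b \<in> SUMS L" using leaf1[of "Seq a b" L] by (auto simp: SUMS_def)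
  next
    fix q x assume "q \<in> SUMS L"
    then show "deriv x q \<in> SUMS L"
    proof (rule SUMS_step)
      fix y assume "y \<in> L"
      then obtain p p' where y: "y = Seq p p'" "p \<in> cl a" "p' \<in> cl b" by (auto simp: L_def)
      have "sim (deriv x y) (sumL [Seq (deriv x p) p', Seq (Conc p) (deriv x p')])"
        using y(1) by (simp, intro sim_plus sim_refl sim_sym[OF ax_plus_phi_r])
      moreover have "set [Seq (deriv x p) p', Seq (Conc p) (deriv x p')] \<subseteq> L"
        using y cl_deriv[OF y(2)] cl_conc[OF y(2)] cl_deriv[OF y(3)] by (auto simp: L_def)
      ultimately show "\<exists>zs. set zs \<subseteq> L \<and> sim (deriv x y) (sumL zs)" by blast
    qed (auto simp: sim_deriv deriv_sumL)
  next
    fix q assume "q \<in> SUMS L"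
    then show "Conc q \<in> SUMS L"
    proof (rule SUMS_step)
      fix y assume "y \<in> L"
      then obtain p p' where y: "y = Seq p p'" "p \<in> cl a" "p' \<in> cl b" by (auto simp: L_def)
      have "Conc y \<in> L" using y cl_conc[OF y(2)] cl_conc[OF y(3)] by (auto simp: L_def)
      then show "\<exists>zs. set zs \<subseteq> L \<and> sim (Conc y) (sumL zs)" by (rule leaf1)
    qed (auto simp: sim_Conc Conc_sumL)
  qed
  obtain Fa Fb where F: "finite Fa" "\<forall>x\<in>cl a. \<exists>f\<in>Fa. sim x f" "finite Fb" "\<forall>x\<in>cl b. \<exists>f\<in>Fb. sim x f"
    using A B by (auto simp: fsim_def)
  have "fsim L"
    unfolding fsim_def
  proof (intro exI[of _ "(\<lambda>(f,g). Seq f g) ` (Fa \<times> Fb)"] conjI ballI)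
    show "finite ((\<lambda>(f,g). Seq f g) ` (Fa \<times> Fb))" using F by simp
  next
    fix x assume "x \<in> L"
    then obtain p q where "x = Seq p q" "p \<in> cl a" "q \<in> cl b" by (auto simp: L_def)
    then obtain f g where "f \<in> Fa" "g \<in> Fb" "sim p f" "sim q g" using F by blast
    then show "\<exists>h\<in>(\<lambda>(f,g). Seq f g) ` (Fa \<times> Fb). sim x h"
      using \<open>x = Seq p q\<close> by (intro bexI[of _ "Seq f g"]) (auto intro: sim_seq)
  qed
  then show ?case by (rule fsim_mono[OF sub fsim_SUMS])
next
  case (Star a)
  then have A: "fsim (cl a)" using wb_sub(3) by blast
  have wb: "\<And>p. p \<in> descendants a \<Longrightarrow> sim (Conc p) Eps \<or> sim (Conc p) Phi"
  proof -
    fix p assume "p \<in> descendants a"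
    then obtain w where "p = derivw w a" by (auto simp: descendants_def)
    moreover have "Star a \<in> subterms (Star a)" by simp
    ultimately have "contained (Conc p) Eps" using Star.prems by (auto simp: well_behaved_def)
    then show "sim (Conc p) Eps \<or> sim (Conc p) Phi" by (rule contained_Eps)
  qed
  define S where "S = Star a"
  define L where "L = {S, Eps} \<union> {Seq p S | p. p \<in> descendants a}"
  have eps_leaf: "\<And>c. sim c Eps \<Longrightarrow> \<exists>zs. set zs \<subseteq> L \<and> sim c (sumL zs)"
  proof -
    fix c :: "'a beh" assume "sim c Eps"
    then have "sim c (sumL [Eps])" using sim_sym[OF ax_plus_phi_r[of Eps]] by (simp, rule sim_trans)
    then show "\<exists>zs. set zs \<subseteq> L \<and> sim c (sumL zs)" by (intro exI[of _ "[Eps]"]) (auto simp: L_def)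
  qed
  have conc_a: "sim (Conc a) Eps \<or> sim (Conc a) Phi" using wb[OF desc_self] .
  have starC: "sim (Star (Conc a)) Eps"
    using conc_a
  proof
    assume "sim (Conc a) Eps" then have "sim (Star (Conc a)) (Star Eps)" by (rule sim_star)
    then show ?thesis using ax_star_eps by (rule sim_trans)
  next
    assume "sim (Conc a) Phi" then have "sim (Star (Conc a)) (Star Phi)" by (rule sim_star)
    then show ?thesis using ax_star_phi by (rule sim_trans)
  qed
  have sub: "cl (Star a) \<subseteq> SUMS L"
  proof (rule subsetI, erule cl.induct)
    show "Star a \<in> SUMS L" using leaf1[of "Star a" L] by (auto simp: SUMS_def L_def S_def)
  next
    fix q x assume "q \<in> SUMS L"
    then show "deriv x q \<in> SUMS L"
    proof (rule SUMS_step)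
      fix y assume "y \<in> L"
      then consider "y = S" | "y = Eps" | p where "y = Seq p S" "p \<in> descendants a"
        by (auto simp: L_def)
      then show "\<exists>zs. set zs \<subseteq> L \<and> sim (deriv x y) (sumL zs)"
      proof cases
        case 1
        have "deriv x y \<in> L" using 1 desc_deriv[OF desc_self[of a], of x]
          by (auto simp: L_def S_def)
        then show ?thesis by (rule leaf1)
      next
        case 2 then show ?thesis by (intro leaf_phi) (simp add: sim_refl)
      next
        case 3
        have dp: "deriv x p \<in> descendants a" using desc_deriv[OF 3(2)] .
        have da: "deriv x a \<in> descendants a" using desc_deriv[OF desc_self] .
        have dy: "deriv x y = Plus (Seq (deriv x p) S) (Seq (Conc p) (Seq (deriv x a) S))"
          using 3(1) by (simp add: S_def)
        from wb[OF 3(2)] show ?thesis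
        proof
          assume c: "sim (Conc p) Eps"
          have "sim (Seq (Conc p) (Seq (deriv x a) S)) (Seq Eps (Seq (deriv x a) S))"
            using c by (intro sim_seq sim_refl)
          then have "sim (Seq (Conc p) (Seq (deriv x a) S)) (Seq (deriv x a) S)"
            using ax_seq_eps_l by (rule sim_trans)
          then have "sim (deriv x y) (Plus (Seq (deriv x p) S) (Seq (deriv x a) S))"
            unfolding dy by (intro sim_plus sim_refl)
          moreover have "sim (Plus (Seq (deriv x p) S) (Seq (deriv x a) S))
              (sumL [Seq (deriv x p) S, Seq (deriv x a) S])"
            by (simp, intro sim_plus sim_refl sim_sym[OF ax_plus_phi_r])
          ultimately have "sim (deriv x y) (sumL [Seq (deriv x p) S, Seq (deriv x a) S])"
            by (rule sim_trans)
          moreover have "set [Seq (deriv x p) S, Seq (deriv x a) S] \<subseteq> L"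
            using dp da by (auto simp: L_def)
          ultimately show ?thesis by blast
        next
          assume c: "sim (Conc p) Phi"
          have "sim (Seq (Conc p) (Seq (deriv x a) S)) (Seq Phi (Seq (deriv x a) S))"
            using c by (intro sim_seq sim_refl)
          then have "sim (Seq (Conc p) (Seq (deriv x a) S)) Phi"
            using ax_seq_phi_l by (rule sim_trans)
          then have "sim (deriv x y) (sumL [Seq (deriv x p) S])"
            unfolding dy by (simp, intro sim_plus sim_refl)
          moreover have "set [Seq (deriv x p) S] \<subseteq> L"
            using dp by (auto simp: L_def)
          ultimately show ?thesis by blast
        qed
      qed
    qed (auto simp: sim_deriv deriv_sumL)
  next
    fix q assume "q \<in> SUMS L"
    then show "Conc q \<in> SUMS L"
    proof (rule SUMS_step)
      fix y assume "y \<in> L"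
      then consider "y = S" | "y = Eps" | p where "y = Seq p S" "p \<in> descendants a"
        by (auto simp: L_def)
      then show "\<exists>zs. set zs \<subseteq> L \<and> sim (Conc y) (sumL zs)"
      proof cases
        case 1 then show ?thesis using starC by (intro eps_leaf) (simp add: S_def)
      next
        case 2 then show ?thesis by (intro eps_leaf) (simp add: sim_refl)
      next
        case 3
        have cy: "Conc y = Seq (Conc p) (Star (Conc a))" using 3(1) by (simp add: S_def)
        have e1: "sim (Conc y) (Seq (Conc p) Eps)" unfolding cy by (intro sim_seq sim_refl starC)
        then have e2: "sim (Conc y) (Conc p)" using ax_seq_eps_r by (rule sim_trans)
        from wb[OF 3(2)] show ?thesis
        proof
          assume "sim (Conc p) Eps" then show ?thesis by (intro eps_leaf sim_trans[OF e2])
        next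
          assume "sim (Conc p) Phi" then show ?thesis by (intro leaf_phi sim_trans[OF e2])
        qed
      qed
    qed (auto simp: sim_Conc Conc_sumL)
  qed
  have Ad: "fsim (descendants a)" by (rule fsim_mono[OF desc_cl A])
  obtain Fa where F: "finite Fa" "\<forall>x\<in>descendants a. \<exists>f\<in>Fa. sim x f"
    using Ad by (auto simp: fsim_def)
  have "fsim L"
    unfolding fsim_def
  proof (intro exI[of _ "{S, Eps} \<union> (\<lambda>f. Seq f S) ` Fa"] conjI ballI)
    show "finite ({S, Eps} \<union> (\<lambda>f. Seq f S) ` Fa)" using F by simp
  next
    fix x assume "x \<in> L"
    then consider "x = S" | "x = Eps" | p where "x = Seq p S" "p \<in> descendants a"
      by (auto simp: L_def)
    then show "\<exists>h\<in>{S, Eps} \<union> (\<lambda>f. Seq f S) ` Fa. sim x h"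
    proof cases
      case 3
      then obtain f where "f \<in> Fa" "sim p f" using F by blast
      then show ?thesis using 3 by (intro bexI[of _ "Seq f S"]) (auto intro: sim_seq sim_refl)
    qed (auto intro: sim_refl)
  qed
  then show ?case by (rule fsim_mono[OF sub fsim_SUMS])
qed

theorem theorem6:
  fixes t :: "'a::finite beh"
  assumes "well_behaved t"
  shows "finite (descendants t // sim_rel)"
proof -
  have "fsim (descendants t)" by (rule fsim_mono[OF desc_cl main[OF assms]])
  then obtain F where F: "finite F" "\<forall>a\<in>descendants t. \<exists>f\<in>F. sim a f" by (auto simp: fsim_def)
  have "descendants t // sim_rel \<subseteq> (\<lambda>f. sim_rel `` {f}) ` F"
  proof
    fix C assume "C \<in> descendants t // sim_rel"
    then obtain x where x: "x \<in> descendants t" "C = sim_rel `` {x}" by (auto simp: quotient_def)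
    then obtain f where f: "f \<in> F" "sim x f" using F by blast
    have "sim_rel `` {x} = sim_rel `` {f}"
      using sim_trans[OF sim_sym[OF f(2)]] sim_trans[OF f(2)] by (auto simp: sim_rel_def)
    then show "C \<in> (\<lambda>f. sim_rel `` {f}) ` F" using x f by blast
  qed
  then show ?thesis using F(1) finite_subset by blast
qed

end
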